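(* Let $\mathcal{CT}$ be a theory of constraints, with set of atomic constraints $\mathcal C$, that is closed under negation and under existential quantification. Then for all finite sets $C,D\subseteq\mathcal C$ such that $C\cup D$ is consistent, there exist sets of constraints $E_1,\dots,E_r$ such that $\mathit{cs}(C,D)=\{E_1,\dots,E_r\}$ is a constraint split of $C$ and $D$.
   Context: $\mathcal{CT}$ is a first-order theory with equality (identity on its domain, including the Clark Equality Theory) whose atomic formulas form the set $\mathcal C$ of (atomic) constraints; $\mathcal{CT}\models\varphi$ means $\varphi$ is valid in $\mathcal{CT}$. A finite set $\{c_1,\dots,c_n\}$ of constraints (or the corresponding conjunction) is consistent if $\mathcal{CT}\models\exists(c_1\wedge\dots\wedge c_n)$; two conjunctions $e,e'$ are mutually exclusive if $\mathcal{CT}\models\neg\exists(e\wedge e')$. $\mathit{vars}(\cdot)$ is the set of variables; for a formula $B$ and set $V$ of variables, $\exists_{-V}B$ denotes $B$ existentially quantified over its free variables not in $V$; $\forall(\cdot)$, $\exists(\cdot)$ are universal and existential closures. $\mathcal{CT}$ is closed under negation if for every $c\in\mathcal C$ there exist $d_1,\dots,d_m\in\mathcal C$ with $\mathcal{CT}\models\forall(\neg c\leftrightarrow(d_1\vee\dots\vee d_m))$ and $\mathcal{CT}\models\neg\exists(d_i\wedge d_j)$ for all $i\ne j$. $\mathcal{CT}$ is closed under existential quantification if for every $\{c_1,\dots,c_m\}\subseteq\mathcal C$ and set $V$ of variables there exist constraints $d_1,\dots,d_n\in\mathcal C$ grouped as $d_1,\dots,d_i,\dots,d_j,\dots,d_n$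 such that $\mathcal{CT}\models\forall(\exists_{-V}(c_1\wedge\dots\wedge c_m)\leftrightarrow((d_1\wedge\dots\wedge d_i)\vee\dots\vee(d_j\wedge\dots\wedge d_n)))$ (i.e. a disjunction of conjunctions of constraints). Constraint split. For $C=\{c_1,\dots,c_m\}$ and $D=\{d_1,\dots,d_n\}$, a constraint split of $C$ and $D$ is a set $\mathit{cs}(C,D)=\{E_1,\dots,E_r\}$ of sets of constraints, with $e_i$ the conjunction of the constraints in $E_i$, such that: (1) $\mathcal{CT}\models\forall((\neg\exists_{-V}(c_1\wedge\dots\wedge c_m)\wedge d_1\wedge\dots\wedge d_n)\leftrightarrow(e_1\vee\dots\vee e_r))$ where $V=\mathit{vars}(C)\cap\mathit{vars}(D)$; (2) each $e_i$ is consistent; (3) $e_i$ and $e_j$ are mutually exclusive for $i\ne j$.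
   Formalization: Validity in $\mathcal{CT}$ means truth under every valuation in one fixed structure, so $\mathcal{CT}$ is taken to be a complete theory. The paper assumes this as well. *)

theory Defs
  imports Main
begin

text \<open>CT is represented by its intended
structure: I c \<sigma> says that constraint c holds under valuation \<sigma>,
vars c is the (finite) set of variables of c. Validity in CT of a formula
is truth in this structure under all valuations (i.e. CT is read as complete).\<close>

definition holds_conj :: "('c \<Rightarrow> ('v \<Rightarrow> 'd) \<Rightarrow> bool) \<Rightarrow> 'c set \<Rightarrow> ('v \<Rightarrow> 'd) \<Rightarrow> bool" where
  "holds_conj I E \<sigma> \<longleftrightarrow> (\<forall>c\<in>E. I c \<sigma>)"

definition exists_except :: "('c \<Rightarrow> ('v \<Rightarrow> 'd) \<Rightarrow> bool) \<Rightarrow> 'c set \<Rightarrow> 'v set \<Rightarrow> ('v \<Rightarrow> 'd) \<Rightarrow> bool" where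
  "exists_except I E V \<sigma> \<longleftrightarrow> (\<exists>\<tau>. (\<forall>v\<in>V. \<tau> v = \<sigma> v) \<and> holds_conj I E \<tau>)"

definition vars_set :: "('c \<Rightarrow> 'v set) \<Rightarrow> 'c set \<Rightarrow> 'v set" where
  "vars_set vars E = (\<Union>c\<in>E. vars c)"

definition consistent :: "('c \<Rightarrow> ('v \<Rightarrow> 'd) \<Rightarrow> bool) \<Rightarrow> 'c set \<Rightarrow> bool" where
  "consistent I E \<longleftrightarrow> (\<exists>\<sigma>. holds_conj I E \<sigma>)"

definition mutually_exclusive :: "('c \<Rightarrow> ('v \<Rightarrow> 'd) \<Rightarrow> bool) \<Rightarrow> 'c set \<Rightarrow> 'c set \<Rightarrow> bool" where
  "mutually_exclusive I E E' \<longleftrightarrow> \<not> (\<exists>\<sigma>. holds_conj I E \<sigma> \<and> holds_conj I E' \<sigma>)"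

definition closed_under_negation :: "('c \<Rightarrow> ('v \<Rightarrow> 'd) \<Rightarrow> bool) \<Rightarrow> bool" where
  "closed_under_negation I \<longleftrightarrow>
     (\<forall>c. \<exists>ds :: 'c list.
        (\<forall>\<sigma>. \<not> I c \<sigma> \<longleftrightarrow> (\<exists>d\<in>set ds. I d \<sigma>)) \<and>
        (\<forall>i<length ds. \<forall>j<length ds. i \<noteq> j \<longrightarrow>
            mutually_exclusive I {ds ! i} {ds ! j}))"

definition closed_under_existential :: "('c \<Rightarrow> ('v \<Rightarrow> 'd) \<Rightarrow> bool) \<Rightarrow> bool" where
  "closed_under_existential I \<longleftrightarrow>
     (\<forall>C (V :: 'v set). finite C \<longrightarrow> (\<exists>Ds :: 'c set list.
        (\<forall>D\<in>set Ds. finite D) \<and>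
        (\<forall>\<sigma>. exists_except I C V \<sigma> \<longleftrightarrow> (\<exists>D\<in>set Ds. holds_conj I D \<sigma>))))"

definition constraint_split ::
  "('c \<Rightarrow> ('v \<Rightarrow> 'd) \<Rightarrow> bool) \<Rightarrow> ('c \<Rightarrow> 'v set) \<Rightarrow> 'c set \<Rightarrow> 'c set \<Rightarrow> 'c set set \<Rightarrow> bool" where
  "constraint_split I vars C D Es \<longleftrightarrow>
     finite Es \<and> (\<forall>E\<in>Es. finite E) \<and>
     (\<forall>\<sigma>. (\<not> exists_except I C (vars_set vars C \<inter> vars_set vars D) \<sigma> \<and> holds_conj I D \<sigma>)
           \<longleftrightarrow> (\<exists>E\<in>Es. holds_conj I E \<sigma>)) \<and>
     (\<forall>E\<in>Es. consistent I E) \<and>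
     (\<forall>E\<in>Es. \<forall>E'\<in>Es. E \<noteq> E' \<longrightarrow> mutually_exclusive I E E')"

end

theory Submission
  imports Defs
begin

theorem proposition7p14:
  fixes I :: "'c \<Rightarrow> ('v \<Rightarrow> 'd) \<Rightarrow> bool" and vars :: "'c \<Rightarrow> 'v set"
  assumes infinite_vars: "infinite (UNIV :: 'v set)"
    and vars_finite: "\<And>c. finite (vars c)"
    and local: "\<And>c \<sigma> \<tau>. (\<forall>v\<in>vars c. \<sigma> v = \<tau> v) \<Longrightarrow> I c \<sigma> = I c \<tau>"
    and equality: "\<And>x y. \<exists>c. vars c = {x, y} \<and> (\<forall>\<sigma>. I c \<sigma> \<longleftrightarrow> \<sigma> x = \<sigma> y)"
    and neg: "closed_under_negation I"
    and ex: "closed_under_existential I"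
    and finC: "finite C" and finD: "finite D"
    and cons: "consistent I (C \<union> D)"
  shows "\<exists>Es. constraint_split I vars C D Es"
proof -
  define V where "V = vars_set vars C \<inter> vars_set vars D"
  obtain nds :: "'c \<Rightarrow> 'c list" where nds:
    "\<And>c. (\<forall>\<sigma>. \<not> I c \<sigma> \<longleftrightarrow> (\<exists>d\<in>set (nds c). I d \<sigma>))"
    "\<And>c. (\<forall>i<length (nds c). \<forall>j<length (nds c). i \<noteq> j \<longrightarrow>
            mutually_exclusive I {nds c ! i} {nds c ! j})"
    using neg unfolding closed_under_negation_def by metis
  obtain Ds where Dsfin: "\<forall>D\<in>set Ds. finite D" and
    Ds: "\<And>\<sigma>. exists_except I C V \<sigma> \<longleftrightarrow> (\<exists>D\<in>set Ds. holds_conj I D \<sigma>)"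
    using ex finC unfolding closed_under_existential_def by metis
  define P where "P = \<Union>(set Ds)"
  have finP: "finite P" using Dsfin by (simp add: P_def)
  define idx where "idx a \<sigma> = (LEAST i. i < length (nds a) \<and> I (nds a ! i) \<sigma>)" for a \<sigma>
  have idx: "idx a \<sigma> < length (nds a) \<and> I (nds a ! idx a \<sigma>) \<sigma>" if "\<not> I a \<sigma>" for a \<sigma>
  proof -
    from nds(1)[of a] that obtain d where "d \<in> set (nds a)" "I d \<sigma>" by blast
    then obtain i where "i < length (nds a) \<and> I (nds a ! i) \<sigma>" by (metis in_set_conv_nth)
    then show ?thesis unfolding idx_def by (rule LeastI)
  qed
  define E where "E \<sigma> = D \<union> {a\<in>P. I a \<sigma>} \<union> {nds a ! idx a \<sigma> | a. a\<in>P \<and> \<not> I a \<sigma>}" for \<sigma>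
  define U where "U = D \<union> P \<union> (\<Union>a\<in>P. set (nds a))"
  have finU: "finite U" using finD finP by (simp add: U_def)
  have EU: "E \<sigma> \<subseteq> U" for \<sigma>
    using idx by (auto simp: E_def U_def)
  have Ehold: "holds_conj I (E \<sigma>) \<sigma>" if "holds_conj I D \<sigma>" for \<sigma>
    using that idx by (auto simp: E_def holds_conj_def)
  have same: "I a \<sigma> \<longleftrightarrow> I a \<tau>" if "holds_conj I (E \<tau>) \<sigma>" "a \<in> P" for a \<sigma> \<tau>
  proof (cases "I a \<tau>")
    case True then show ?thesis using that by (auto simp: E_def holds_conj_def)
  next
    case False
    then have "nds a ! idx a \<tau> \<in> E \<tau>" using that(2) by (auto simp: E_def)
    then have "I (nds a ! idx a \<tau>) \<sigma>" using that(1) by (auto simp: holds_conj_def)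
    then have "\<not> I a \<sigma>" using nds(1)[of a] idx[OF False] by (metis nth_mem)
    then show ?thesis using False by simp
  qed
  have sameEx: "exists_except I C V \<sigma> \<longleftrightarrow> exists_except I C V \<tau>" if "holds_conj I (E \<tau>) \<sigma>" for \<sigma> \<tau>
  proof -
    have "holds_conj I D' \<sigma> \<longleftrightarrow> holds_conj I D' \<tau>" if "D' \<in> set Ds" for D'
      using same[OF \<open>holds_conj I (E \<tau>) \<sigma>\<close>] that by (auto simp: holds_conj_def P_def)
    then show ?thesis using Ds by metis
  qed
  have Dsub: "holds_conj I D \<sigma>" if "holds_conj I (E \<tau>) \<sigma>" for \<sigma> \<tau>
    using that by (auto simp: E_def holds_conj_def)
  define S where "S = {\<sigma>. \<not> exists_except I C V \<sigma> \<and> holds_conj I D \<sigma>}"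
  have mx: "E \<sigma> = E \<tau>" if "holds_conj I (E \<sigma>) \<rho>" "holds_conj I (E \<tau>) \<rho>" for \<sigma> \<tau> \<rho>
  proof -
    have st: "I a \<sigma> \<longleftrightarrow> I a \<tau>" if "a \<in> P" for a
      using same[OF \<open>holds_conj I (E \<sigma>) \<rho>\<close> that] same[OF \<open>holds_conj I (E \<tau>) \<rho>\<close> that] by simp
    have ix: "idx a \<sigma> = idx a \<tau>" if "a \<in> P" "\<not> I a \<sigma>" for a
    proof (rule ccontr)
      assume ne: "idx a \<sigma> \<noteq> idx a \<tau>"
      have nt: "\<not> I a \<tau>" using st that by simp
      have "nds a ! idx a \<sigma> \<in> E \<sigma>" "nds a ! idx a \<tau> \<in> E \<tau>"
        using that nt by (auto simp: E_def)
      then have "I (nds a ! idx a \<sigma>) \<rho>" "I (nds a ! idx a \<tau>) \<rho>"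
        using \<open>holds_conj I (E \<sigma>) \<rho>\<close> \<open>holds_conj I (E \<tau>) \<rho>\<close> by (auto simp: holds_conj_def)
      moreover have "mutually_exclusive I {nds a ! idx a \<sigma>} {nds a ! idx a \<tau>}"
        using nds(2)[of a] idx[OF that(2)] idx[OF nt] ne by blast
      ultimately show False by (auto simp: mutually_exclusive_def holds_conj_def)
    qed
    show ?thesis unfolding E_def using st ix by (auto; metis)
  qed
  have "constraint_split I vars C D (E ` S)"
    unfolding constraint_split_def
  proof (intro conjI ballI allI impI)
    show "finite (E ` S)"
      by (rule finite_subset[of _ "Pow U"]) (use EU finU in auto)
    show "finite X" if "X \<in> E ` S" for X using that EU finU finite_subset by blast
    show "consistent I X" if "X \<in> E ` S" for X
      using that Ehold by (auto simp: S_def consistent_def)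
    show "mutually_exclusive I X Y" if "X \<in> E ` S" "Y \<in> E ` S" "X \<noteq> Y" for X Y
      using that mx by (auto simp: mutually_exclusive_def)
    show "(\<not> exists_except I C (vars_set vars C \<inter> vars_set vars D) \<sigma> \<and> holds_conj I D \<sigma>) =
         (\<exists>X\<in>E ` S. holds_conj I X \<sigma>)" for \<sigma>
    proof
      assume "\<not> exists_except I C (vars_set vars C \<inter> vars_set vars D) \<sigma> \<and> holds_conj I D \<sigma>"
      then show "\<exists>X\<in>E ` S. holds_conj I X \<sigma>" using Ehold by (auto simp: S_def V_def)
    next
      assume "\<exists>X\<in>E ` S. holds_conj I X \<sigma>"
      then obtain \<tau> where "\<tau> \<in> S" "holds_conj I (E \<tau>) \<sigma>" by auto
      then show "\<not> exists_except I C (vars_set vars C \<inter> vars_set vars D) \<sigma> \<and> holds_conj I D \<sigma>"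
        using sameEx Dsub by (auto simp: S_def V_def)
    qed
  qed
  then show ?thesis by blast
qed

end
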